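(* Consider a network with a source node $SN$, a destination node $DN$ and a finite set of relay nodes (RNs). Let $S$ be the set of legitimate routes, where a legitimate route is a sequence of nodes starting at $SN$, ending at $DN$, and containing each RN at most once. Let $K\ge 1$ and suppose each route (and each sub-route, i.e. any sequence of consecutive links starting at $SN$) $y$ is assigned a utility vector $\mathbf{f}(y)=[f_1(y),\dots,f_K(y)]$ such that, for every $k\in\{1,\dots,K\}$, $$f_k(y)=\sum_{i=1}^{|y|-1} f_k(y_{i,i+1}),$$ where $|y|$ is the number of nodes of $y$, $y_{i,i+1}$ is the link between its $i$-th and $(i+1)$-st nodes, and every link value is positive: $f_k(y_{i,i+1})>0$ for all $k$, $i$ and all routes $y$. Let $x=\{SN\rightarrow \bar{R}_i\rightarrow DN\}\in S$, where $\bar{R}_i$ denotes the (ordered) sequence of RNs of $x$, and let $x'=\{SN\rightarrow\bar{R}_i\}$ be its sub-route (all links of $x$ except the last hop). Suppose there exists a route $x_d=\{SN\rightarrow\bar{R}_j\rightarrow DN\}\in S$ with $\bar{R}_j\neq\bar{R}_i$ that weakly dominates $x'$, i.e. $\mathbf{f}(x_d)\succeq\mathbf{f}(x')$. Then $x$ cannot generate any Pareto-optimal route: every legitimate route $x_g^{(j)}=\{SN\rightarrow\bar{R}_i\rightarrow R_j\rightarrow DN\}$ obtained from $x$ by inserting a single RN $R_j$ between the last RN of $x$ and $DN$ is not Pareto-optimal.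
   Context: Dominance (all objectives are to be minimized): for utility vectors $\mathbf{f}(a)=[f_1(a),\dots,f_K(a)]$ and $\mathbf{f}(b)$, $a$ strongly dominates $b$, written $\mathbf{f}(a)\succ\mathbf{f}(b)$, iff $f_k(a)<f_k(b)$ for all $k\in\{1,\dots,K\}$; $a$ weakly dominates $b$, written $\mathbf{f}(a)\succeq\mathbf{f}(b)$, iff $f_k(a)\le f_k(b)$ for all $k$ and $f_{k'}(a)<f_{k'}(b)$ for some $k'$. A route $x\in S$ is Pareto-optimal iff there is no route $y\in S$ with $\mathbf{f}(y)\succ\mathbf{f}(x)$. Route generation: a route $x=\{SN\rightarrow\bar{R}_i\rightarrow DN\}$ generates the route $x_g^{(j)}=\{SN\rightarrow\bar{R}_i\rightarrow R_j\rightarrow DN\}$ by inserting a single relay node $R_j$ between the last RN of $x$ and $DN$. *)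

theory Defs
  imports Complex_Main
begin

definition legit_route :: "'a \<Rightarrow> 'a \<Rightarrow> 'a set \<Rightarrow> 'a list \<Rightarrow> bool" where
  "legit_route SN DN R y \<longleftrightarrow>
     length y \<ge> 2 \<and> hd y = SN \<and> last y = DN \<and>
     distinct (butlast (tl y)) \<and> set (butlast (tl y)) \<subseteq> R"

definition route_utility :: "(nat \<Rightarrow> 'a \<Rightarrow> 'a \<Rightarrow> real) \<Rightarrow> nat \<Rightarrow> 'a list \<Rightarrow> real" where
  "route_utility g k y = (\<Sum>i<length y - 1. g k (y ! i) (y ! (i + 1)))"

definition strongly_dominates :: "nat \<Rightarrow> (nat \<Rightarrow> 'r \<Rightarrow> real) \<Rightarrow> 'r \<Rightarrow> 'r \<Rightarrow> bool" where
  "strongly_dominates K f a b \<longleftrightarrow> (\<forall>k\<in>{1..K}. f k a < f k b)"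

definition weakly_dominates :: "nat \<Rightarrow> (nat \<Rightarrow> 'r \<Rightarrow> real) \<Rightarrow> 'r \<Rightarrow> 'r \<Rightarrow> bool" where
  "weakly_dominates K f a b \<longleftrightarrow>
     (\<forall>k\<in>{1..K}. f k a \<le> f k b) \<and> (\<exists>k\<in>{1..K}. f k a < f k b)"

definition pareto_optimal :: "nat \<Rightarrow> (nat \<Rightarrow> 'r \<Rightarrow> real) \<Rightarrow> 'r set \<Rightarrow> 'r \<Rightarrow> bool" where
  "pareto_optimal K f S x \<longleftrightarrow> x \<in> S \<and> \<not> (\<exists>y\<in>S. strongly_dominates K f y x)"

end

theory Submission
  imports Defs
begin

lemma ru_snoc:
  assumes "xs \<noteq> []"
  shows "route_utility g k (xs @ [a]) = route_utility g k xs + g k (last xs) a"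
proof -
  obtain n where n: "length xs = Suc n" using assms by (cases xs) auto
  have "route_utility g k (xs @ [a]) = (\<Sum>i<Suc n. g k ((xs@[a]) ! i) ((xs@[a]) ! (i + 1)))"
    unfolding route_utility_def using n by simp
  also have "\<dots> = (\<Sum>i<n. g k ((xs@[a]) ! i) ((xs@[a]) ! (i + 1))) + g k ((xs@[a]) ! n) ((xs@[a]) ! Suc n)"
    by simp
  also have "(\<Sum>i<n. g k ((xs@[a]) ! i) ((xs@[a]) ! (i + 1))) = (\<Sum>i<n. g k (xs ! i) (xs ! (i + 1)))"
    by (rule sum.cong) (auto simp: nth_append n)
  also have "(xs@[a]) ! n = last xs" using n assms by (simp add: nth_append last_conv_nth)
  also have "(xs@[a]) ! Suc n = a" using n by (simp add: nth_append)
  finally show ?thesis unfolding route_utility_def using n by simp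
qed

theorem proposition1:
  fixes SN DN :: 'a and R :: "'a set" and K :: nat
    and g :: "nat \<Rightarrow> 'a \<Rightarrow> 'a \<Rightarrow> real"
    and S :: "'a list set"
    and rs rs' :: "'a list"
  assumes fin: "finite R"
    and SN_DN: "SN \<noteq> DN" "SN \<notin> R" "DN \<notin> R"
    and S_def: "S = {y. legit_route SN DN R y}"
    and K: "K \<ge> 1"
    and pos: "\<forall>y\<in>S. \<forall>k\<in>{1..K}. \<forall>i<length y - 1. g k (y ! i) (y ! (i + 1)) > 0"
    and x_in: "SN # rs @ [DN] \<in> S"
    and xd_in: "SN # rs' @ [DN] \<in> S"
    and neq: "rs' \<noteq> rs"
    and dom: "weakly_dominates K (route_utility g) (SN # rs' @ [DN]) (SN # rs)"
  shows "\<forall>r. SN # rs @ [r, DN] \<in> S \<longrightarrow>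
           \<not> pareto_optimal K (route_utility g) S (SN # rs @ [r, DN])"
proof (intro allI impI)
  fix r assume rin: "SN # rs @ [r, DN] \<in> S"
  let ?y = "SN # rs @ [r, DN]"
  let ?p = "SN # rs"
  have eq: "?y = (?p @ [r]) @ [DN]" by simp
  have "strongly_dominates K (route_utility g) (SN # rs' @ [DN]) ?y"
    unfolding strongly_dominates_def
  proof
    fix k assume k: "k \<in> {1..K}"
    have le: "route_utility g k (SN # rs' @ [DN]) \<le> route_utility g k ?p"
      using dom k unfolding weakly_dominates_def by blast
    have u: "route_utility g k ?y = route_utility g k ?p + g k (last ?p) r + g k r DN"
      unfolding eq by (simp add: ru_snoc del: append_assoc append.simps)
    have P: "\<forall>i<length ?y - 1. g k (?y ! i) (?y ! (i + 1)) > 0"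
      using pos rin k by blast
    have "g k (?y ! length rs) (?y ! (length rs + 1)) > 0" using P[rule_format, of "length rs"] by simp
    moreover have "?y ! length rs = last ?p"
      by (cases rs rule: rev_cases) (auto simp: nth_append)
    moreover have "?y ! (length rs + 1) = r" by (simp add: nth_append)
    ultimately have g1: "g k (last ?p) r > 0" by simp
    have "g k (?y ! (length rs + 1)) (?y ! (length rs + 1 + 1)) > 0" using P[rule_format, of "length rs + 1"] by simp
    moreover have "?y ! (length rs + 1 + 1) = DN" by (simp add: nth_append)
    ultimately have g2: "g k r DN > 0" by (simp add: nth_append)
    show "route_utility g k (SN # rs' @ [DN]) < route_utility g k ?y"
      using le u g1 g2 by linarith
  qed
  then show "\<not> pareto_optimal K (route_utility g) S ?y"
    unfolding pareto_optimal_def using xd_in by blast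
qed

end
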